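(* Fix a learning dynamic over $n$ actions with conversion function $f:\mathbb{R}^n\to\Delta^n$, and let $\mathbf{x}^{*,a},\mathbf{x}^{*,b}\in\mathbb{R}^n$. Let $S^a$ and $S^b$ be its learning operators with shifts $\mathbf{x}^{*,a}$ and $\mathbf{x}^{*,b}$ respectively. Then $S^a$ is passive (resp. lossless) via a storage function $L^a(\mathbf{q})$ if and only if $S^b$ is passive (resp. lossless) via the storage function $L^a(\mathbf{q})-\langle \mathbf{x}^{*,b}-\mathbf{x}^{*,a},\mathbf{q}\rangle+c$, where $c$ is any real constant.
   Context: $\Delta^n=\{\mathbf{x}\in\mathbb{R}^n: x_j\ge 0,\ \sum_j x_j=1\}$. A learning dynamic over $n$ actions is specified by a conversion function $f:\mathbb{R}^n\to\Delta^n$: given an initial state $\mathbf{q}^0\in\mathbb{R}^n$ and an input (payoff) function $\mathbf{p}:[0,\infty)\to\mathbb{R}^n$ that is square integrable on every bounded interval, its state is $\mathbf{q}(t)=\mathbf{q}^0+\int_0^t\mathbf{p}(\tau)\,d\tau$ and its output strategy is $\mathbf{x}(t)=f(\mathbf{q}(t))$. For $\mathbf{x}^*\in\mathbb{R}^n$, the learning operator with shift $\mathbf{x}^*$ has state $\mathbf{q}$, input $\mathbf{p}$, output $\mathbf{x}-\mathbf{x}^*$. It is passive via a storage function $L:\mathbb{R}^n\to\mathbb{R}$ if for every initial state $\mathbf{q}^0$, every input $\mathbf{p}$ and every $t\ge0$, $L(\mathbf{q}(t))\le L(\mathbf{q}^0)+\int_0^t\langle\mathbf{p}(\tau),\mathbf{x}(\tau)-\mathbf{x}^*\rangle\,d\tau$,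 and lossless via $L$ if equality always holds. *)

theory Defs
  imports "HOL-Analysis.Analysis"
begin

definition prob_simplex :: "(real^'n) set" where
  "prob_simplex = {x. (\<forall>j. 0 \<le> x $ j) \<and> (\<Sum>j\<in>UNIV. x $ j) = 1}"

text \<open>Admissible inputs: p : [0,oo) -> R^n square integrable on every bounded interval
  (values of p at negative times are irrelevant).\<close>
definition sq_integrable_on :: "(real \<Rightarrow> real^'n) \<Rightarrow> real set \<Rightarrow> bool" where
  "sq_integrable_on p S \<longleftrightarrow> p measurable_on S \<and> (\<lambda>\<tau>. (norm (p \<tau>))\<^sup>2) integrable_on S"

definition admissible_input :: "(real \<Rightarrow> real^'n) \<Rightarrow> bool" where
  "admissible_input p \<longleftrightarrow> (\<forall>a b. 0 \<le> a \<longrightarrow> sq_integrable_on p {a..b})"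

definition ld_state :: "real^'n \<Rightarrow> (real \<Rightarrow> real^'n) \<Rightarrow> real \<Rightarrow> real^'n" where
  "ld_state q0 p t = q0 + integral {0..t} p"

definition ld_output :: "(real^'n \<Rightarrow> real^'n) \<Rightarrow> real^'n \<Rightarrow> (real \<Rightarrow> real^'n) \<Rightarrow> real \<Rightarrow> real^'n" where
  "ld_output f q0 p t = f (ld_state q0 p t)"

text \<open>Learning operator with shift xs (state q, input p, output x - xs) passive via L.
  The supply integral int_0^t <p, x - xs> is required to exist.\<close>
definition passive_via :: "(real^'n \<Rightarrow> real^'n) \<Rightarrow> real^'n \<Rightarrow> (real^'n \<Rightarrow> real) \<Rightarrow> bool" where
  "passive_via f xs L \<longleftrightarrow>
     (\<forall>q0 p t. admissible_input p \<longrightarrow> 0 \<le> t \<longrightarrow>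
        (\<exists>I. ((\<lambda>\<tau>. inner (p \<tau>) (ld_output f q0 p \<tau> - xs)) has_integral I) {0..t}
             \<and> L (ld_state q0 p t) \<le> L q0 + I))"

definition lossless_via :: "(real^'n \<Rightarrow> real^'n) \<Rightarrow> real^'n \<Rightarrow> (real^'n \<Rightarrow> real) \<Rightarrow> bool" where
  "lossless_via f xs L \<longleftrightarrow>
     (\<forall>q0 p t. admissible_input p \<longrightarrow> 0 \<le> t \<longrightarrow>
        (\<exists>I. ((\<lambda>\<tau>. inner (p \<tau>) (ld_output f q0 p \<tau> - xs)) has_integral I) {0..t}
             \<and> L (ld_state q0 p t) = L q0 + I))"

end

theory Submission
  imports Defs
begin

lemma adm_integrable:
  fixes p :: "real \<Rightarrow> real^'n"
  assumes "admissible_input p" "0 \<le> t"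
  shows "p integrable_on {0..t}"
proof -
  have m: "p measurable_on {0..t}" and s: "(\<lambda>\<tau>. (norm (p \<tau>))\<^sup>2) integrable_on {0..t}"
    using assms unfolding admissible_input_def sq_integrable_on_def by auto
  have b: "p \<in> borel_measurable (lebesgue_on {0..t})"
    by (rule measurable_on_imp_borel_measurable_lebesgue[OF m]) auto
  have g: "(\<lambda>\<tau>. 1 + (norm (p \<tau>))\<^sup>2) integrable_on {0..t}"
    by (rule integrable_add[OF integrable_const_ivl s])
  have "norm (p x) \<le> 1 + (norm (p x))\<^sup>2" for x
  proof (cases "norm (p x) \<le> 1")
    case True then show ?thesis by (smt (verit) zero_le_power2)
  next
    case False then have "norm (p x) \<le> norm (p x) * norm (p x)" by (simp add: mult_le_cancel_left1)
    then show ?thesis by (simp add: power2_eq_square)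
  qed
  then show ?thesis
    by (intro measurable_bounded_by_integrable_imp_integrable[OF b g]) auto
qed

lemma inner_int:
  fixes p :: "real \<Rightarrow> real^'n"
  assumes "admissible_input p" "0 \<le> t"
  shows "((\<lambda>\<tau>. inner (p \<tau>) d) has_integral inner (integral {0..t} p) d) {0..t}"
proof -
  have "(p has_integral integral {0..t} p) {0..t}"
    using adm_integrable[OF assms] by (simp add: integrable_integral)
  from has_integral_linear[OF this bounded_linear_inner_left[of d]] show ?thesis
    by (simp add: o_def)
qed

lemma key:
  fixes f :: "real^'n \<Rightarrow> real^'n" and xa xb :: "real^'n"
  assumes "admissible_input p" "0 \<le> t"
    and "((\<lambda>\<tau>. inner (p \<tau>) (ld_output f q0 p \<tau> - xa)) has_integral I) {0..t}"
  shows "((\<lambda>\<tau>. inner (p \<tau>) (ld_output f q0 p \<tau> - xb)) has_integral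
            (I - inner (integral {0..t} p) (xb - xa))) {0..t}"
proof -
  have "((\<lambda>\<tau>. inner (p \<tau>) (ld_output f q0 p \<tau> - xa) - inner (p \<tau>) (xb - xa)) has_integral
            (I - inner (integral {0..t} p) (xb - xa))) {0..t}"
    by (rule has_integral_diff[OF assms(3) inner_int[OF assms(1,2)]])
  moreover have "\<And>\<tau>. inner (p \<tau>) (ld_output f q0 p \<tau> - xa) - inner (p \<tau>) (xb - xa)
      = inner (p \<tau>) (ld_output f q0 p \<tau> - xb)"
    by (simp add: inner_diff_right)
  ultimately show ?thesis by simp
qed

lemma shift_eq:
  fixes La :: "real^'n \<Rightarrow> real"
  shows "(La (ld_state q0 p t) - inner (xb - xa) (ld_state q0 p t) + c
          \<le> La q0 - inner (xb - xa) q0 + c + (I - inner (integral {0..t} p) (xb - xa)))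
       = (La (ld_state q0 p t) \<le> La q0 + I)"
    "(La (ld_state q0 p t) - inner (xb - xa) (ld_state q0 p t) + c
          = La q0 - inner (xb - xa) q0 + c + (I - inner (integral {0..t} p) (xb - xa)))
       = (La (ld_state q0 p t) = La q0 + I)"
  unfolding ld_state_def by (auto simp: inner_add_right inner_commute)

theorem proposition3p4:
  fixes f :: "real^'n \<Rightarrow> real^'n" and xa xb :: "real^'n"
    and La :: "real^'n \<Rightarrow> real" and c :: real
  assumes "\<forall>q. f q \<in> prob_simplex"
  shows "(passive_via f xa La \<longleftrightarrow>
            passive_via f xb (\<lambda>q. La q - inner (xb - xa) q + c))
       \<and> (lossless_via f xa La \<longleftrightarrow>
            lossless_via f xb (\<lambda>q. La q - inner (xb - xa) q + c))"
proof -
  have k2: "((\<lambda>\<tau>. inner (p \<tau>) (ld_output f q0 p \<tau> - xa)) has_integral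
            (J + inner (integral {0..t} p) (xb - xa))) {0..t}"
    if "admissible_input p" "0 \<le> t"
      "((\<lambda>\<tau>. inner (p \<tau>) (ld_output f q0 p \<tau> - xb)) has_integral J) {0..t}" for p t q0 J
    using key[OF that(1,2) that(3), of xa] by (simp add: inner_diff_right algebra_simps)
  have e: "inner (integral {0..t} p) (xb - xa) = - inner (integral {0..t} p) (xa - xb)" for t p
    by (simp add: inner_diff_right)
  show ?thesis
    unfolding passive_via_def lossless_via_def
  proof (intro conjI iffI allI impI)
    fix q0 :: "real^'n" and p :: "real \<Rightarrow> real^'n" and t :: real
    assume H: "\<forall>q0 p t. admissible_input p \<longrightarrow> 0 \<le> t \<longrightarrow>
        (\<exists>I. ((\<lambda>\<tau>. inner (p \<tau>) (ld_output f q0 p \<tau> - xa)) has_integral I) {0..t} \<and>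
             La (ld_state q0 p t) \<le> La q0 + I)"
      and a: "admissible_input p" "0 \<le> t"
    then obtain I where I: "((\<lambda>\<tau>. inner (p \<tau>) (ld_output f q0 p \<tau> - xa)) has_integral I) {0..t}"
      "La (ld_state q0 p t) \<le> La q0 + I" by blast
    show "\<exists>I. ((\<lambda>\<tau>. inner (p \<tau>) (ld_output f q0 p \<tau> - xb)) has_integral I) {0..t} \<and>
             La (ld_state q0 p t) - inner (xb - xa) (ld_state q0 p t) + c
             \<le> La q0 - inner (xb - xa) q0 + c + I"
      using key[OF a I(1)] shift_eq(1)[of La q0 p t xb xa c I] I(2) by blast
  next
    fix q0 :: "real^'n" and p :: "real \<Rightarrow> real^'n" and t :: real
    assume H: "\<forall>q0 p t. admissible_input p \<longrightarrow> 0 \<le> t \<longrightarrow>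
        (\<exists>I. ((\<lambda>\<tau>. inner (p \<tau>) (ld_output f q0 p \<tau> - xb)) has_integral I) {0..t} \<and>
             La (ld_state q0 p t) - inner (xb - xa) (ld_state q0 p t) + c
             \<le> La q0 - inner (xb - xa) q0 + c + I)"
      and a: "admissible_input p" "0 \<le> t"
    then obtain J where J: "((\<lambda>\<tau>. inner (p \<tau>) (ld_output f q0 p \<tau> - xb)) has_integral J) {0..t}"
      "La (ld_state q0 p t) - inner (xb - xa) (ld_state q0 p t) + c
             \<le> La q0 - inner (xb - xa) q0 + c + J" by blast
    define I where "I = J + inner (integral {0..t} p) (xb - xa)"
    have "J = I - inner (integral {0..t} p) (xb - xa)" unfolding I_def by simp
    then show "\<exists>I. ((\<lambda>\<tau>. inner (p \<tau>) (ld_output f q0 p \<tau> - xa)) has_integral I) {0..t} \<and>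
             La (ld_state q0 p t) \<le> La q0 + I"
      using k2[OF a J(1)] J(2) shift_eq(1)[of La q0 p t xb xa c I] unfolding I_def by metis
  next
    fix q0 :: "real^'n" and p :: "real \<Rightarrow> real^'n" and t :: real
    assume H: "\<forall>q0 p t. admissible_input p \<longrightarrow> 0 \<le> t \<longrightarrow>
        (\<exists>I. ((\<lambda>\<tau>. inner (p \<tau>) (ld_output f q0 p \<tau> - xa)) has_integral I) {0..t} \<and>
             La (ld_state q0 p t) = La q0 + I)"
      and a: "admissible_input p" "0 \<le> t"
    then obtain I where I: "((\<lambda>\<tau>. inner (p \<tau>) (ld_output f q0 p \<tau> - xa)) has_integral I) {0..t}"
      "La (ld_state q0 p t) = La q0 + I" by blast
    show "\<exists>I. ((\<lambda>\<tau>. inner (p \<tau>) (ld_output f q0 p \<tau> - xb)) has_integral I) {0..t} \<and>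
             La (ld_state q0 p t) - inner (xb - xa) (ld_state q0 p t) + c
             = La q0 - inner (xb - xa) q0 + c + I"
      using key[OF a I(1)] shift_eq(2)[of La q0 p t xb xa c I] I(2) by blast
  next
    fix q0 :: "real^'n" and p :: "real \<Rightarrow> real^'n" and t :: real
    assume H: "\<forall>q0 p t. admissible_input p \<longrightarrow> 0 \<le> t \<longrightarrow>
        (\<exists>I. ((\<lambda>\<tau>. inner (p \<tau>) (ld_output f q0 p \<tau> - xb)) has_integral I) {0..t} \<and>
             La (ld_state q0 p t) - inner (xb - xa) (ld_state q0 p t) + c
             = La q0 - inner (xb - xa) q0 + c + I)"
      and a: "admissible_input p" "0 \<le> t"
    then obtain J where J: "((\<lambda>\<tau>. inner (p \<tau>) (ld_output f q0 p \<tau> - xb)) has_integral J) {0..t}"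
      "La (ld_state q0 p t) - inner (xb - xa) (ld_state q0 p t) + c
             = La q0 - inner (xb - xa) q0 + c + J" by blast
    define I where "I = J + inner (integral {0..t} p) (xb - xa)"
    have "J = I - inner (integral {0..t} p) (xb - xa)" unfolding I_def by simp
    then show "\<exists>I. ((\<lambda>\<tau>. inner (p \<tau>) (ld_output f q0 p \<tau> - xa)) has_integral I) {0..t} \<and>
             La (ld_state q0 p t) = La q0 + I"
      using k2[OF a J(1)] J(2) shift_eq(2)[of La q0 p t xb xa c I] unfolding I_def by metis
  qed
qed

end
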